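(* Let $n\ge 3$ and let $\mathcal{H}$ be the associating hypergraph on $M(D_n,2)$. Then its matching polynomial is $$M(\mathcal{H},w)=\sum_{k=0}^{\,n+\lfloor n/3\rfloor} a_k\, w_1^{\,4n-3k}\, w_2^{\,k},$$ where $a_k$ is the number of $k$-matchings of $\mathcal{H}$, and $a_k\neq 0$ for $k=n+\lfloor n/3\rfloor$.
   Context: $D_n=\langle x,y\mid x^n=y^2=1,\ xy=yx^{-1}\rangle$. $M(D_n,2)=\{(g,\alpha): g\in D_n,\ \alpha\in\mathbb{Z}_2\}$ with $(g_1,\alpha_1)\circ(g_2,\alpha_2)=(g_1^{1-\alpha_2} g_2^{(-1)^{\alpha_1}} g_1^{\alpha_2},\ \alpha_1+\alpha_2)$. The associating hypergraph $\mathcal{H}$ has vertex set $M(D_n,2)$ ($4n$ vertices), and a 3-element set $\{a,b,c\}$ of distinct elements is a hyperedge when $(a\circ b)\circ c=a\circ(b\circ c)$. A $k$-matching is a set of $k$ pairwise vertex-disjoint hyperedges. For a 3-uniform hypergraph with vertex set $V$, the matching polynomial is $M(\mathcal{H},w)=\sum_{M} w_1^{|V|-3|M|} w_2^{|M|}$, the sum over all matchings $M$ (including the empty one), where $w_1,w_2$ are indeterminates (weights of unmatched vertices and of matching hyperedges). *)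

theory Defs
  imports Main
begin

text \<open>Dihedral group D_n = <x,y | x^n = y^2 = 1, xy = yx^{-1}>, modelled concretely:
  the pair (i, s) with i < n, s < 2 stands for x^i y^s.
  Then x^i y^s * x^j y^t = x^(i + (-1)^s j) y^(s+t).\<close>

type_synonym dih = "nat \<times> nat"

definition dih_carrier :: "nat \<Rightarrow> dih set" where
  "dih_carrier n = {0..<n} \<times> {0..<2}"

fun dmul :: "nat \<Rightarrow> dih \<Rightarrow> dih \<Rightarrow> dih" where
  "dmul n (i, s) (j, t) =
     ((if s = 0 then i + j else i + (n - j mod n)) mod n, (s + t) mod 2)"

fun dinv :: "nat \<Rightarrow> dih \<Rightarrow> dih" where
  "dinv n (i, s) = (if s = 0 then ((n - i mod n) mod n, 0) else (i, s))"

definition dpow :: "nat \<Rightarrow> dih \<Rightarrow> nat \<Rightarrow> dih" where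
  "dpow n g a = (if a = 0 then (0, 0) else g)"

definition dsgn :: "nat \<Rightarrow> dih \<Rightarrow> nat \<Rightarrow> dih" where
  "dsgn n g a = (if a = 0 then g else dinv n g)"

definition M_carrier :: "nat \<Rightarrow> (dih \<times> nat) set" where
  "M_carrier n = dih_carrier n \<times> {0..<2}"

fun mop :: "nat \<Rightarrow> dih \<times> nat \<Rightarrow> dih \<times> nat \<Rightarrow> dih \<times> nat" where
  "mop n (g1, a1) (g2, a2) =
     (dmul n (dmul n (dpow n g1 (1 - a2)) (dsgn n g2 a1)) (dpow n g1 a2), (a1 + a2) mod 2)"

definition hyperedges :: "nat \<Rightarrow> (dih \<times> nat) set set" where
  "hyperedges n = {E. \<exists>a b c. a \<in> M_carrier n \<and> b \<in> M_carrier n \<and> c \<in> M_carrier n \<and>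
       distinct [a, b, c] \<and> E = {a, b, c} \<and> mop n (mop n a b) c = mop n a (mop n b c)}"

definition matchings :: "nat \<Rightarrow> (dih \<times> nat) set set set" where
  "matchings n = {M. M \<subseteq> hyperedges n \<and> (\<forall>e\<in>M. \<forall>f\<in>M. e \<noteq> f \<longrightarrow> e \<inter> f = {})}"

definition num_matchings :: "nat \<Rightarrow> nat \<Rightarrow> nat" where
  "num_matchings n k = card {M \<in> matchings n. card M = k}"

definition matching_poly :: "nat \<Rightarrow> 'a::comm_ring_1 \<Rightarrow> 'a \<Rightarrow> 'a" where
  "matching_poly n w1 w2 =
     (\<Sum>M\<in>matchings n. w1 ^ (card (M_carrier n) - 3 * card M) * w2 ^ card M)"

end

theory Submission imports Defs begin

definition D :: "nat \<Rightarrow> int \<Rightarrow> nat \<Rightarrow> dih" where "D n z s = (nat (z mod int n), s)"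

lemma D_eq: "n > 0 \<Longrightarrow> (D n x s = D n y t) \<longleftrightarrow> (x mod int n = y mod int n \<and> s = t)"
  unfolding D_def by (auto simp: nat_eq_iff)

lemma to_D: "i < n \<Longrightarrow> (i, s) = D n (int i) s"
  unfolding D_def by simp

lemma dmul_D: assumes "n > 0"
  shows "dmul n (D n z s) (D n w t) = D n (z + (if s = 0 then w else - w)) ((s + t) mod 2)"
proof (cases "s = 0")
  case True
  have "int ((nat (z mod int n) + nat (w mod int n)) mod n) = (z + w) mod int n"
    using assms by (simp add: zmod_int mod_simps)
  then show ?thesis using True unfolding D_def by (simp add: nat_eq_iff2 del: of_nat_mod)
next
  case False
  have lt: "nat (w mod int n) < n" using assms by (simp add: nat_less_iff)
  have "int ((nat (z mod int n) + (n - nat (w mod int n) mod n)) mod n) = (z - w) mod int n"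
  proof -
    have "int ((nat (z mod int n) + (n - nat (w mod int n) mod n)) mod n)
        = (z mod int n + (int n - w mod int n)) mod int n"
      using lt assms by (simp add: zmod_int of_nat_diff algebra_simps)
    also have "\<dots> = ((z mod int n - w mod int n) + int n) mod int n" by (simp add: algebra_simps)
    also have "\<dots> = (z mod int n - w mod int n) mod int n" by (simp only: mod_add_self2)
    also have "\<dots> = (z - w) mod int n" by (simp add: mod_diff_eq)
    finally show ?thesis .
  qed
  then show ?thesis using False unfolding D_def by (simp add: nat_eq_iff2 del: of_nat_mod)
qed

lemma dinv_D: assumes "n > 0" shows "dinv n (D n z s) = (if s = 0 then D n (- z) 0 else D n z s)"
proof -
  have lt: "nat (z mod int n) \<le> n" using assms by (simp add: nat_le_iff order.strict_implies_order)
  have "int ((n - nat (z mod int n) mod n) mod n) = (- z) mod int n"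
  proof -
    have "int ((n - nat (z mod int n) mod n) mod n) = (int n - z mod int n) mod int n"
      using lt assms by (simp add: zmod_int of_nat_diff)
    also have "\<dots> = (- z) mod int n" by (simp add: mod_simps)
    finally show ?thesis .
  qed
  then show ?thesis unfolding D_def by (simp add: nat_eq_iff2 del: of_nat_mod)
qed

lemma zero_D: "(0::nat, 0::nat) = D n 0 0" unfolding D_def by simp

lemma dpow_D: "dpow n g a = (if a = 0 then D n 0 0 else g)"
  unfolding dpow_def D_def by simp

lemma assoc_T:
  assumes "n > 0" "T \<in> {{(0,0),(0,1)}, {(1,1),(0,0)}, {(0,0),(1,0)}}"
    "(s1,a1) \<in> T" "(s2,a2) \<in> T" "(s3,a3) \<in> T"
  shows "mop n (mop n (D n z1 s1, a1) (D n z2 s2, a2)) (D n z3 s3, a3)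
       = mop n (D n z1 s1, a1) (mop n (D n z2 s2, a2) (D n z3 s3, a3))"
  using assms(2-5) apply (simp only: insert_iff empty_iff simp_thms)
  apply (elim disjE FalseE; hypsubst; simp only: insert_iff empty_iff prod.inject simp_thms; elim disjE conjE; hypsubst)
  apply (simp_all add: dpow_D dsgn_def dinv_D dmul_D assms(1))
  apply (simp_all add: algebra_simps)
  done

lemma finite_carrier: "finite (M_carrier n)"
  unfolding M_carrier_def dih_carrier_def by simp

lemma card_carrier: "card (M_carrier n) = 4 * n"
  unfolding M_carrier_def dih_carrier_def by (simp only: card_cartesian_product card_atLeastLessThan) simp

lemma hyperedge_sub: assumes "e \<in> hyperedges n" shows "e \<subseteq> M_carrier n \<and> card e = 3"
proof -
  obtain a b c where "a \<in> M_carrier n" "b \<in> M_carrier n" "c \<in> M_carrier n" "distinct [a, b, c]" "e = {a, b, c}"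
    using assms unfolding hyperedges_def by blast
  then show ?thesis by (simp del: mop.simps)
qed

lemma finite_hyperedges: "finite (hyperedges n)"
proof -
  have "hyperedges n \<subseteq> Pow (M_carrier n)" using hyperedge_sub by (simp add: subset_iff del: mop.simps)
  then show ?thesis by (rule finite_subset) (simp add: finite_carrier)
qed

lemma finite_matchings: "finite (matchings n)"
proof -
  have "matchings n \<subseteq> Pow (hyperedges n)" unfolding matchings_def by blast
  then show ?thesis by (rule finite_subset) (simp add: finite_hyperedges)
qed

lemma matching_card: assumes "M \<in> matchings n" shows "3 * card M \<le> 4 * n"
proof -
  have sub: "M \<subseteq> hyperedges n" and dis: "\<forall>e\<in>M. \<forall>f\<in>M. e \<noteq> f \<longrightarrow> e \<inter> f = {}"
    using assms unfolding matchings_def by auto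
  have "pairwise disjnt M" using dis unfolding pairwise_def disjnt_def by blast
  moreover have "\<And>A. A \<in> M \<Longrightarrow> finite A" using sub hyperedge_sub finite_carrier by (meson finite_subset subsetD)
  ultimately have "card (\<Union>M) = sum card M" by (rule card_Union_disjoint)
  also have "\<dots> = sum (\<lambda>_. 3) M" using sub hyperedge_sub by (intro sum.cong refl) blast
  also have "\<dots> = 3 * card M" by simp
  finally have e: "card (\<Union>M) = 3 * card M" .
  have "\<Union>M \<subseteq> M_carrier n" using sub hyperedge_sub by blast
  then have "card (\<Union>M) \<le> card (M_carrier n)" using finite_carrier card_mono by blast
  then show ?thesis using e card_carrier by simp
qed

lemma assoc_carrier:
  assumes "n > 0" "T \<in> {{(0,0),(0,1)}, {(1,1),(0,0)}, {(0,0),(1,0)}}"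
    "x \<in> M_carrier n" "y \<in> M_carrier n" "z \<in> M_carrier n"
    "(snd (fst x), snd x) \<in> T" "(snd (fst y), snd y) \<in> T" "(snd (fst z), snd z) \<in> T"
  shows "mop n (mop n x y) z = mop n x (mop n y z)"
proof -
  obtain i1 s1 a1 where x: "x = ((i1, s1), a1)" "i1 < n" using assms(3) unfolding M_carrier_def dih_carrier_def by auto
  obtain i2 s2 a2 where y: "y = ((i2, s2), a2)" "i2 < n" using assms(4) unfolding M_carrier_def dih_carrier_def by auto
  obtain i3 s3 a3 where z: "z = ((i3, s3), a3)" "i3 < n" using assms(5) unfolding M_carrier_def dih_carrier_def by auto
  show ?thesis
    unfolding x(1) y(1) z(1) to_D[OF x(2)] to_D[OF y(2)] to_D[OF z(2)]
    by (rule assoc_T[OF assms(1,2)]) (use assms(6-8) x y z in simp_all)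
qed

lemma extend:
  assumes "finite S" "S \<subseteq> M_carrier n"
    "\<forall>x\<in>S. \<forall>y\<in>S. \<forall>z\<in>S. mop n (mop n x y) z = mop n x (mop n y z)"
    "M0 \<in> matchings n" "\<Union>M0 \<inter> S = {}" "3 * k \<le> card S"
  shows "\<exists>M \<in> matchings n. card M = card M0 + k \<and> \<Union>M \<subseteq> \<Union>M0 \<union> S"
  using assms
proof (induction k arbitrary: S M0)
  case 0
  then show ?case by auto
next
  case (Suc k)
  have fM0: "finite M0" using Suc.prems(4) finite_hyperedges[of n] unfolding matchings_def
    by (blast intro: finite_subset)
  have "card S \<ge> 3" using Suc.prems(6) by simp
  then have "S \<noteq> {}" by auto
  then obtain a where a: "a \<in> S" by blast
  have "card (S - {a}) \<ge> 2" using \<open>card S \<ge> 3\<close> a Suc.prems(1) by simp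
  then have "S - {a} \<noteq> {}" by (metis card.empty not_numeral_le_zero)
  then obtain b where b: "b \<in> S - {a}" by blast
  have "card (S - {a} - {b}) \<ge> 1" using \<open>card (S - {a}) \<ge> 2\<close> b Suc.prems(1) by simp
  then have "S - {a} - {b} \<noteq> {}" by (metis card.empty not_one_le_zero)
  then obtain c where c: "c \<in> S - {a} - {b}" by blast
  define e where "e = {a, b, c}"
  have eS: "e \<subseteq> S" using a b c unfolding e_def by auto
  have card_e: "card e = 3" using b c unfolding e_def by auto
  have ehe: "e \<in> hyperedges n"
  proof -
    have "a \<in> M_carrier n" "b \<in> M_carrier n" "c \<in> M_carrier n" using a b c Suc.prems(2) by blast+
    moreover have "distinct [a, b, c]" using b c by auto
    moreover have "mop n (mop n a b) c = mop n a (mop n b c)" using a b c Suc.prems(3) by blast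
    ultimately show ?thesis unfolding hyperedges_def e_def by blast
  qed
  have enot: "e \<notin> M0" using Suc.prems(5) eS a unfolding e_def by blast
  define M1 where "M1 = insert e M0"
  have M1m: "M1 \<in> matchings n" using Suc.prems(4,5) eS ehe unfolding M1_def matchings_def by blast
  have cM1: "card M1 = Suc (card M0)" unfolding M1_def using fM0 enot by simp
  define S' where "S' = S - e"
  have cS': "card S' = card S - 3" unfolding S'_def using card_e eS Suc.prems(1)
    by (simp add: card_Diff_subset finite_subset)
  have "\<exists>M \<in> matchings n. card M = card M1 + k \<and> \<Union>M \<subseteq> \<Union>M1 \<union> S'"
  proof (rule Suc.IH)
    show "finite S'" unfolding S'_def using Suc.prems(1) by simp
    show "S' \<subseteq> M_carrier n" unfolding S'_def using Suc.prems(2) by blast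
    show "\<forall>x\<in>S'. \<forall>y\<in>S'. \<forall>z\<in>S'. mop n (mop n x y) z = mop n x (mop n y z)"
      unfolding S'_def using Suc.prems(3) by blast
    show "M1 \<in> matchings n" by (rule M1m)
    show "\<Union>M1 \<inter> S' = {}" unfolding S'_def M1_def using Suc.prems(5) by blast
    show "3 * k \<le> card S'" using cS' Suc.prems(6) by simp
  qed
  then obtain M where M: "M \<in> matchings n" "card M = card M1 + k" "\<Union>M \<subseteq> \<Union>M1 \<union> S'" by blast
  have "\<Union>M1 \<union> S' \<subseteq> \<Union>M0 \<union> S" using eS unfolding M1_def S'_def by blast
  with M(3) have "\<Union>M \<subseteq> \<Union>M0 \<union> S" by (rule subset_trans)
  then show ?case using cM1 M(1,2) by (intro bexI[of _ M]) auto
qed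

lemma clique_T:
  assumes "n > 0" "T \<in> {{(0,0),(0,1)}, {(1,1),(0,0)}, {(0,0),(1,0)}}"
    "S \<subseteq> M_carrier n" "\<forall>x\<in>S. (snd (fst x), snd x) \<in> T"
  shows "\<forall>x\<in>S. \<forall>y\<in>S. \<forall>z\<in>S. mop n (mop n x y) z = mop n x (mop n y z)"
proof (intro ballI)
  fix x y z assume "x \<in> S" "y \<in> S" "z \<in> S"
  then show "mop n (mop n x y) z = mop n x (mop n y z)"
    using assms by (intro assoc_carrier[of n T]) (simp_all add: subsetD del: mop.simps)
qed

lemma exists_max: assumes "n \<ge> 3" shows "\<exists>M \<in> matchings n. card M = n + n div 3"
proof -
  obtain m r where nm: "n = 3 * m + r" "r < 3" by (metis div_mod_decomp mult.commute mod_less_divisor zero_less_numeral)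
  then have "n = 3 * m \<or> n = 3 * m + 1 \<or> n = 3 * m + 2" by auto
  then obtain p q :: nat where pq: "p + q \<le> 2"
    "(n + p) div 3 + (n + q) div 3 + (2 * n - (p + q)) div 3 = n + n div 3"
  proof (elim disjE)
    assume h: "n = 3 * m" show thesis by (rule that[of 0 0]) (simp_all add: h)
  next
    assume h: "n = 3 * m + 1" show thesis by (rule that[of 2 0]) (simp_all add: h)
  next
    assume h: "n = 3 * m + 2" show thesis by (rule that[of 1 1]) (simp_all add: h)
  qed
  have n0: "n > 0" using assms by simp
  define R1 where "R1 = (\<lambda>i. ((i, 0::nat), 0::nat)) ` {0..<p}"
  define R2 where "R2 = (\<lambda>i. ((i, 0::nat), 0::nat)) ` {p..<p+q}"
  define R where "R = (\<lambda>i. ((i, 0::nat), 0::nat)) ` {0..<p+q}"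
  define A where "A = (\<lambda>i. ((i, 0::nat), 1::nat)) ` {0..<n} \<union> R1"
  define B where "B = (\<lambda>i. ((i, 1::nat), 1::nat)) ` {0..<n} \<union> R2"
  define C where "C = (\<lambda>g. (g, 0::nat)) ` dih_carrier n - R"
  have inj1: "inj_on (\<lambda>i. ((i, 0::nat), 0::nat)) X" for X by (simp add: inj_on_def)
  have inj2: "inj_on (\<lambda>i. ((i, 0::nat), 1::nat)) X" for X by (simp add: inj_on_def)
  have inj3: "inj_on (\<lambda>i. ((i, 1::nat), 1::nat)) X" for X by (simp add: inj_on_def)
  have inj4: "inj_on (\<lambda>g. (g, 0::nat)) X" for X :: "dih set" by (simp add: inj_on_def)
  have finA: "finite A" and finB: "finite B" and finC: "finite C"
    unfolding A_def B_def C_def R1_def R2_def R_def dih_carrier_def by simp_all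
  have subA: "A \<subseteq> M_carrier n" using pq(1) assms
    unfolding A_def R1_def M_carrier_def dih_carrier_def by auto
  have subB: "B \<subseteq> M_carrier n" using pq(1) assms
    unfolding B_def R2_def M_carrier_def dih_carrier_def by auto
  have subC: "C \<subseteq> M_carrier n"
    unfolding C_def M_carrier_def dih_carrier_def by auto
  have cA: "card A = n + p"
  proof -
    have "card A = card ((\<lambda>i. ((i, 0::nat), 1::nat)) ` {0..<n}) + card R1"
      unfolding A_def R1_def by (rule card_Un_disjoint) auto
    then show ?thesis unfolding R1_def by (simp add: card_image inj_on_def)
  qed
  have cB: "card B = n + q"
  proof -
    have "card B = card ((\<lambda>i. ((i, 1::nat), 1::nat)) ` {0..<n}) + card R2"
      unfolding B_def R2_def by (rule card_Un_disjoint) auto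
    then show ?thesis unfolding R2_def by (simp add: card_image inj_on_def)
  qed
  have cC: "card C = 2 * n - (p + q)"
  proof -
    have sub: "R \<subseteq> (\<lambda>g. (g, 0::nat)) ` dih_carrier n"
      using pq(1) assms unfolding R_def dih_carrier_def by auto
    have "card C = card ((\<lambda>g. (g, 0::nat)) ` dih_carrier n) - card R"
      unfolding C_def by (rule card_Diff_subset) (use sub in \<open>auto simp: R_def\<close>)
    also have "card ((\<lambda>g. (g, 0::nat)) ` dih_carrier n) = 2 * n"
      by (simp only: card_image[OF inj4] dih_carrier_def card_cartesian_product card_atLeastLessThan) simp
    also have "card R = p + q" unfolding R_def by (simp add: card_image inj1)
    finally show ?thesis .
  qed
  have dAB: "A \<inter> B = {}" unfolding A_def B_def R1_def R2_def by auto
  have dABC: "(A \<union> B) \<inter> C = {}" unfolding A_def B_def C_def R1_def R2_def R_def by auto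
  have clA: "\<forall>x\<in>A. \<forall>y\<in>A. \<forall>z\<in>A. mop n (mop n x y) z = mop n x (mop n y z)"
    by (rule clique_T[OF n0 _ subA, of "{(0,0),(0,1)}"]) (auto simp: A_def R1_def)
  have clB: "\<forall>x\<in>B. \<forall>y\<in>B. \<forall>z\<in>B. mop n (mop n x y) z = mop n x (mop n y z)"
    by (rule clique_T[OF n0 _ subB, of "{(1,1),(0,0)}"]) (auto simp: B_def R2_def)
  have clC: "\<forall>x\<in>C. \<forall>y\<in>C. \<forall>z\<in>C. mop n (mop n x y) z = mop n x (mop n y z)"
    by (rule clique_T[OF n0 _ subC, of "{(0,0),(1,0)}"]) (auto simp: C_def dih_carrier_def)
  have m0: "{} \<in> matchings n" unfolding matchings_def by simp
  have "3 * ((n + p) div 3) \<le> card A" using cA by simp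
  from extend[OF finA subA clA m0 _ this] obtain M1 where M1: "M1 \<in> matchings n"
      "card M1 = card ({}::(dih \<times> nat) set set) + (n + p) div 3" "\<Union>M1 \<subseteq> \<Union>{} \<union> A"
    by blast
  have "\<Union>M1 \<inter> B = {}" using M1(3) dAB by auto
  moreover have "3 * ((n + q) div 3) \<le> card B" using cB by simp
  ultimately obtain M2 where M2: "M2 \<in> matchings n" "card M2 = card M1 + (n + q) div 3"
      "\<Union>M2 \<subseteq> \<Union>M1 \<union> B"
    using extend[OF finB subB clB M1(1)] by blast
  have "\<Union>M2 \<inter> C = {}" using M2(3) M1(3) dABC by auto
  moreover have "3 * ((2 * n - (p + q)) div 3) \<le> card C" using cC by simp
  ultimately obtain M3 where M3: "M3 \<in> matchings n" "card M3 = card M2 + (2 * n - (p + q)) div 3"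
    using extend[OF finC subC clC M2(1)] by blast
  have c1: "card M1 = (n + p) div 3" using M1(2) by simp
  have "card M3 = n + n div 3" using M3(2) M2(2) c1 pq(2) by linarith
  then show ?thesis using M3(1) by (rule rev_bexI[rotated])
qed

theorem mainTheorem11:
  fixes n :: nat
  assumes "n \<ge> 3"
  shows "(\<forall>w1 w2 :: 'a::comm_ring_1. matching_poly n w1 w2 =
            (\<Sum>k = 0..n + n div 3. of_nat (num_matchings n k) * w1 ^ (4 * n - 3 * k) * w2 ^ k))
         \<and> num_matchings n (n + n div 3) \<noteq> 0"
proof
  show "\<forall>w1 w2 :: 'a::comm_ring_1. matching_poly n w1 w2 =
            (\<Sum>k = 0..n + n div 3. of_nat (num_matchings n k) * w1 ^ (4 * n - 3 * k) * w2 ^ k)"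
  proof (intro allI)
    fix w1 w2 :: 'a
    let ?h = "\<lambda>M. w1 ^ (4 * n - 3 * card M) * w2 ^ card M"
    have img: "card ` matchings n \<subseteq> {0..n + n div 3}"
    proof
      fix k assume "k \<in> card ` matchings n"
      then obtain M where "M \<in> matchings n" "k = card M" by blast
      then have "3 * k \<le> 4 * n" using matching_card by simp
      then show "k \<in> {0..n + n div 3}" by simp
    qed
    have "matching_poly n w1 w2 = sum ?h (matchings n)"
      unfolding matching_poly_def card_carrier ..
    also have "\<dots> = (\<Sum>k = 0..n + n div 3. sum ?h {M. M \<in> matchings n \<and> card M = k})"
      by (rule sum.group[symmetric]) (use finite_matchings img in auto)
    also have "\<dots> = (\<Sum>k = 0..n + n div 3. of_nat (num_matchings n k) * w1 ^ (4 * n - 3 * k) * w2 ^ k)"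
    proof (rule sum.cong[OF refl])
      fix k
      have "sum ?h {M. M \<in> matchings n \<and> card M = k}
          = sum (\<lambda>_. w1 ^ (4 * n - 3 * k) * w2 ^ k) {M. M \<in> matchings n \<and> card M = k}"
        by (rule sum.cong) auto
      also have "\<dots> = of_nat (num_matchings n k) * (w1 ^ (4 * n - 3 * k) * w2 ^ k)"
        unfolding num_matchings_def by (simp only: sum_constant)
      finally show "sum ?h {M. M \<in> matchings n \<and> card M = k}
          = of_nat (num_matchings n k) * w1 ^ (4 * n - 3 * k) * w2 ^ k"
        by (simp add: mult.assoc)
    qed
    finally show "matching_poly n w1 w2 =
            (\<Sum>k = 0..n + n div 3. of_nat (num_matchings n k) * w1 ^ (4 * n - 3 * k) * w2 ^ k)" .
  qed
  show "num_matchings n (n + n div 3) \<noteq> 0"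
  proof -
    obtain M where "M \<in> matchings n" "card M = n + n div 3" using exists_max[OF assms] by blast
    then have "{M \<in> matchings n. card M = n + n div 3} \<noteq> {}" by blast
    moreover have "finite {M \<in> matchings n. card M = n + n div 3}" using finite_matchings by simp
    ultimately show ?thesis unfolding num_matchings_def by simp
  qed
qed

end
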